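(* Let $K$ be a field of characteristic $0$ and let $K[x,y]$ be the polynomial algebra in two variables over $K$. Consider the following bijections of the set $K[x,y]\times K[x,y]$ of pairs of polynomials: (E1) for $a\in K^{\ast}$ and an integer $k\ge 2$, the map $(u,v)\mapsto (u+a\,v^k,\ v)$; (E2) for $a\in K^{\ast}$ and an integer $k\ge 2$, the map $(u,v)\mapsto (u,\ v+a\,u^k)$. Let $A$ be the group (under composition) generated by all transformations of type (E1), let $B$ be the group generated by all transformations of type (E2), and let $G$ be the group generated by all transformations of types (E1) and (E2) together. Then $G$ is the free product of its subgroups $A$ and $B$, i.e. the homomorphism $A\ast B\to G$ induced by the inclusions $A\hookrightarrow G$ and $B\hookrightarrow G$ is an isomorphism. (The subgroups $A$ and $B$ are abelian.)
   Context: Via the action on the pair $(x,y)$, transformations of pairs of polynomials correspond to (tuples of images under) automorphisms of $K[x,y]$; the groups $A$, $B$, $G$ are groups of permutations of $K[x,y]\times K[x,y]$ under composition. *)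

theory Defs
  imports "HOL-Computational_Algebra.Polynomial" "HOL-Algebra.Bij" "HOL-Algebra.Generated_Groups"
begin

text \<open>K[x,y] is represented as (K[x])[y], i.e. the type 'a poly poly.
  A pair of polynomials is an element of 'a poly poly \<times> 'a poly poly.\<close>

type_synonym 'a ppair = "'a poly poly \<times> 'a poly poly"

definition cst2 :: "'a::field \<Rightarrow> 'a poly poly" where
  "cst2 a = [:[:a:]:]"

definition E1 :: "'a::field \<Rightarrow> nat \<Rightarrow> 'a ppair \<Rightarrow> 'a ppair" where
  "E1 a k = (\<lambda>(u, v). (u + cst2 a * v ^ k, v))"

definition E2 :: "'a::field \<Rightarrow> nat \<Rightarrow> 'a ppair \<Rightarrow> 'a ppair" where
  "E2 a k = (\<lambda>(u, v). (u, v + cst2 a * u ^ k))"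

definition E1_maps :: "('a::field ppair \<Rightarrow> 'a ppair) set" where
  "E1_maps = {E1 a k | a k. a \<noteq> 0 \<and> k \<ge> 2}"

definition E2_maps :: "('a::field ppair \<Rightarrow> 'a ppair) set" where
  "E2_maps = {E2 a k | a k. a \<noteq> 0 \<and> k \<ge> 2}"

abbreviation PermG :: "('a::field ppair \<Rightarrow> 'a ppair) monoid" where
  "PermG \<equiv> BijGroup UNIV"

definition groupA :: "('a::field ppair \<Rightarrow> 'a ppair) set" where
  "groupA = generate PermG E1_maps"

definition groupB :: "('a::field ppair \<Rightarrow> 'a ppair) set" where
  "groupB = generate PermG E2_maps"

definition groupG :: "('a::field ppair \<Rightarrow> 'a ppair) set" where
  "groupG = generate PermG (E1_maps \<union> E2_maps)"

text \<open>A list of elements alternating between A-{1} and B-{1} (starting in either).\<close>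
definition alternating_word :: "('a, 'b) monoid_scheme \<Rightarrow> 'a set \<Rightarrow> 'a set \<Rightarrow> 'a list \<Rightarrow> bool" where
  "alternating_word G A B ws \<longleftrightarrow>
     (\<exists>s::nat. \<forall>i < length ws. ws ! i \<in> (if even (i + s) then A else B) - {\<one>\<^bsub>G\<^esub>})"

text \<open>Internal free product: G is generated by its subgroups A and B, and every nonempty
  alternating product of nontrivial elements of A and B is nontrivial (normal form theorem);
  this is exactly the statement that the canonical map A * B \<rightarrow> G is an isomorphism.\<close>
definition is_free_product :: "('a, 'b) monoid_scheme \<Rightarrow> 'a set \<Rightarrow> 'a set \<Rightarrow> bool" where
  "is_free_product G A B \<longleftrightarrow>
     group G \<and> subgroup A G \<and> subgroup B G \<and> generate G (A \<union> B) = carrier G \<and>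
     (\<forall>ws. ws \<noteq> [] \<and> alternating_word G A B ws \<longrightarrow>
        foldr (\<lambda>x y. x \<otimes>\<^bsub>G\<^esub> y) ws \<one>\<^bsub>G\<^esub> \<noteq> \<one>\<^bsub>G\<^esub>)"

end

theory Submission
  imports Defs
begin

definition ev :: "'a::field poly \<Rightarrow> 'a poly poly \<Rightarrow> 'a poly poly" where
  "ev P v = pcompose (map_poly (\<lambda>c. [:c:]) P) v"

definition shA :: "'a::field poly \<Rightarrow> 'a ppair \<Rightarrow> 'a ppair" where
  "shA P = (\<lambda>(u, v). (u + ev P v, v))"
definition shB :: "'a::field poly \<Rightarrow> 'a ppair \<Rightarrow> 'a ppair" where
  "shB P = (\<lambda>(u, v). (u, v + ev P u))"

lemma ev_add: "ev (P + Q) v = ev P v + ev Q v"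
proof -
  have "map_poly (\<lambda>c. [:c:]) (P + Q) = map_poly (\<lambda>c. [:c:]) P + map_poly (\<lambda>c. [:c:]) Q"
    by (rule poly_eqI) (simp add: coeff_map_poly)
  then show ?thesis unfolding ev_def by (simp add: pcompose_add)
qed

lemma ev_0[simp]: "ev 0 v = 0"
  unfolding ev_def by simp

lemma ev_monom: "ev (monom a k) v = cst2 a * v ^ k"
proof -
  have pw: "pcompose (p ^ n) q = (pcompose p q) ^ n" for p q :: "'b::comm_semiring_1 poly" and n
    by (induct n) (simp_all add: pcompose_mult pcompose_1)
  have "map_poly (\<lambda>c. [:c:]) (monom a k) = monom [:a:] k"
    by (simp add: map_poly_monom)
  then show ?thesis unfolding ev_def cst2_def
    by (simp add: monom_altdef pcompose_smult pw pcompose_pCons)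
qed

lemma Bij_UNIV: "(f \<in> Bij UNIV) = bij f"
  by (simp add: Bij_def)

lemma one_PermG: "\<one>\<^bsub>BijGroup UNIV\<^esub> = id"
  by (auto simp: BijGroup_def)

lemma mult_PermG: "bij f \<Longrightarrow> bij g \<Longrightarrow> f \<otimes>\<^bsub>BijGroup UNIV\<^esub> g = f \<circ> g"
  by (auto simp: BijGroup_def Bij_UNIV compose_def)

lemma shA_comp: "shA P \<circ> shA Q = shA (P + Q)"
  by (auto simp: shA_def ev_add algebra_simps)
lemma shB_comp: "shB P \<circ> shB Q = shB (P + Q)"
  by (auto simp: shB_def ev_add algebra_simps)
lemma shA_0: "shA 0 = id"
  by (auto simp: shA_def)
lemma shB_0: "shB 0 = id"
  by (auto simp: shB_def)

lemma bij_shA: "bij (shA P)"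
  by (rule o_bij[of "shA (-P)"]) (simp_all add: shA_comp shA_0)
lemma bij_shB: "bij (shB P)"
  by (rule o_bij[of "shB (-P)"]) (simp_all add: shB_comp shB_0)

lemma E1_shA: "E1 a k = shA (monom a k)"
  by (auto simp: E1_def shA_def ev_monom)
lemma E2_shB: "E2 a k = shB (monom a k)"
  by (auto simp: E2_def shB_def ev_monom)

lemma mult_shA: "shA P \<otimes>\<^bsub>BijGroup UNIV\<^esub> shA Q = shA (P + Q)"
  by (simp add: mult_PermG bij_shA shA_comp)
lemma mult_shB: "shB P \<otimes>\<^bsub>BijGroup UNIV\<^esub> shB Q = shB (P + Q)"
  by (simp add: mult_PermG bij_shB shB_comp)

lemma inv_shA: "inv\<^bsub>BijGroup UNIV\<^esub> (shA P) = shA (-P)"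
  by (rule group.inv_equality[OF group_BijGroup])
     (simp add: mult_shA shA_0 one_PermG, (simp add: BijGroup_def Bij_UNIV bij_shA)+)
lemma inv_shB: "inv\<^bsub>BijGroup UNIV\<^esub> (shB P) = shB (-P)"
  by (rule group.inv_equality[OF group_BijGroup])
     (simp add: mult_shB shB_0 one_PermG, (simp add: BijGroup_def Bij_UNIV bij_shB)+)

definition TA :: "('a::field ppair \<Rightarrow> 'a ppair) set" where
  "TA = {shA P | P. coeff P 0 = 0 \<and> coeff P 1 = 0}"
definition TB :: "('a::field ppair \<Rightarrow> 'a ppair) set" where
  "TB = {shB P | P. coeff P 0 = 0 \<and> coeff P 1 = 0}"

lemma groupA_TA: "groupA \<subseteq> TA"
proof
  fix h assume "h \<in> groupA"
  then have "h \<in> generate PermG E1_maps" by (simp add: groupA_def)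
  then show "h \<in> TA"
  proof induction
    case one
    then show ?case unfolding TA_def by (auto simp: one_PermG shA_0 intro!: exI[of _ 0])
  next
    case (incl h)
    then obtain a k where "h = shA (monom a k)" "k \<ge> 2" by (auto simp: E1_maps_def E1_shA)
    then show ?case unfolding TA_def by (auto intro!: exI[of _ "monom a k"])
  next
    case (inv h)
    then obtain a k where "h = shA (monom a k)" "k \<ge> 2" by (auto simp: E1_maps_def E1_shA)
    then show ?case unfolding TA_def by (auto simp: inv_shA intro!: exI[of _ "- monom a k"])
  next
    case (eng h1 h2)
    then show ?case unfolding TA_def by (auto simp: mult_shA)
  qed
qed

lemma groupB_TB: "groupB \<subseteq> TB"
proof
  fix h assume "h \<in> groupB"
  then have "h \<in> generate PermG E2_maps" by (simp add: groupB_def)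
  then show "h \<in> TB"
  proof induction
    case one
    then show ?case unfolding TB_def by (auto simp: one_PermG shB_0 intro!: exI[of _ 0])
  next
    case (incl h)
    then obtain a k where "h = shB (monom a k)" "k \<ge> 2" by (auto simp: E2_maps_def E2_shB)
    then show ?case unfolding TB_def by (auto intro!: exI[of _ "monom a k"])
  next
    case (inv h)
    then obtain a k where "h = shB (monom a k)" "k \<ge> 2" by (auto simp: E2_maps_def E2_shB)
    then show ?case unfolding TB_def by (auto simp: inv_shB intro!: exI[of _ "- monom a k"])
  next
    case (eng h1 h2)
    then show ?case unfolding TB_def by (auto simp: mult_shB)
  qed
qed

lemma deg_ge2: assumes "coeff P 0 = 0" "coeff P 1 = 0" "P \<noteq> 0" shows "degree P \<ge> 2"
proof (rule ccontr)
  assume "\<not> degree P \<ge> 2"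
  have "coeff P n = 0" for n
  proof (cases "n \<le> 1")
    case True
    then have "n = 0 \<or> n = 1" by auto
    then show ?thesis using assms(1,2) by auto
  next
    case False
    then show ?thesis using \<open>\<not> degree P \<ge> 2\<close> by (intro coeff_eq_0) simp
  qed
  then have "P = 0" by (intro poly_eqI) simp
  with assms(3) show False by simp
qed

lemma degree_ev: "degree (ev P v) = degree P * degree v"
  unfolding ev_def by (simp add: degree_pcompose degree_map_poly)

lemma step_deg:
  fixes u v :: "'a::field poly poly"
  assumes "degree P \<ge> 2" "degree v \<ge> 1" "degree u \<le> degree v"
  shows "degree (u + ev P v) = degree P * degree v \<and> degree P * degree v > degree v"
proof -
  have "degree P * degree v \<ge> 2 * degree v" using assms(1) by simp
  then have *: "degree P * degree v > degree v" using assms(2) by linarith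
  have "degree u < degree P * degree v" using assms(3) \<open>degree P * degree v \<ge> 2 * degree v\<close> assms(2) by linarith
  then have "degree u < degree (ev P v)" by (simp add: degree_ev)
  then show ?thesis using * by (simp add: degree_add_eq_right degree_ev)
qed

lemma elemA: "h \<in> groupA \<Longrightarrow> h \<noteq> id \<Longrightarrow> \<exists>P. h = shA P \<and> degree P \<ge> 2"
  using groupA_TA deg_ge2 shA_0 unfolding TA_def by blast
lemma elemB: "h \<in> groupB \<Longrightarrow> h \<noteq> id \<Longrightarrow> \<exists>P. h = shB P \<and> degree P \<ge> 2"
  using groupB_TB deg_ge2 shB_0 unfolding TB_def by blast

definition YY :: "'a::field ppair" where "YY = ([:0,1:], [:0,1:])"

lemma word:
  assumes "\<forall>i<length ws. ws ! i \<in> (if even (i + s) then groupA else groupB) - {id}"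
  shows "degree (fst (foldr (\<circ>) ws id YY)) \<ge> 1 \<and> degree (snd (foldr (\<circ>) ws id YY)) \<ge> 1 \<and>
    (if ws = [] then degree (fst (foldr (\<circ>) ws id YY)) = degree (snd (foldr (\<circ>) ws id YY))
     else if even s then degree (fst (foldr (\<circ>) ws id YY)) > degree (snd (foldr (\<circ>) ws id YY))
     else degree (snd (foldr (\<circ>) ws id YY)) > degree (fst (foldr (\<circ>) ws id YY)))"
  using assms
proof (induction ws arbitrary: s)
  case Nil
  then show ?case by (simp add: YY_def)
next
  case (Cons w rest)
  have "\<forall>i<length rest. rest ! i \<in> (if even (i + Suc s) then groupA else groupB) - {id}"
    using Cons.prems by (metis Suc_less_eq add_Suc add_Suc_right length_Cons nth_Cons_Suc)
  note IH = Cons.IH[OF this]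
  obtain u v where uv: "foldr (\<circ>) rest id YY = (u, v)" by fastforce
  have fw: "foldr (\<circ>) (w # rest) id YY = w (u, v)" using uv by simp
  have w: "w \<in> (if even s then groupA else groupB) - {id}" using Cons.prems by force
  have IH': "degree u \<ge> 1 \<and> degree v \<ge> 1 \<and> (if rest = [] then degree u = degree v
     else if even (Suc s) then degree u > degree v else degree v > degree u)"
    using IH unfolding uv by (auto split: if_splits)
  show ?case
  proof (cases "even s")
    case True
    then obtain P where P: "w = shA P" "degree P \<ge> 2" using w elemA by auto
    have "degree u \<le> degree v" using IH' True by (auto split: if_splits)
    from step_deg[OF P(2) _ this] IH' True P show ?thesis unfolding fw
      by (auto simp: shA_def)
  next
    case False
    then obtain P where P: "w = shB P" "degree P \<ge> 2" using w elemB by auto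
    have "degree v \<le> degree u" using IH' False by (auto split: if_splits)
    from step_deg[OF P(2) _ this] IH' False P show ?thesis unfolding fw
      by (auto simp: shB_def)
  qed
qed

lemma foldr_eq:
  "(\<forall>w\<in>set ws. bij w) \<Longrightarrow> foldr (\<lambda>x y. x \<otimes>\<^bsub>BijGroup UNIV\<^esub> y) ws \<one>\<^bsub>BijGroup UNIV\<^esub> = foldr (\<circ>) ws id
     \<and> bij (foldr (\<circ>) ws id)"
  by (induction ws) (auto simp: one_PermG mult_PermG bij_comp)

lemma bij_A: "h \<in> groupA \<Longrightarrow> bij h"
  using groupA_TA bij_shA unfolding TA_def by blast
lemma bij_B: "h \<in> groupB \<Longrightarrow> bij h"
  using groupB_TB bij_shB unfolding TB_def by blast

lemma E1_sub: "E1_maps \<subseteq> carrier (BijGroup UNIV)"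
  by (auto simp: E1_maps_def E1_shA BijGroup_def Bij_UNIV bij_shA)
lemma E2_sub: "E2_maps \<subseteq> carrier (BijGroup UNIV)"
  by (auto simp: E2_maps_def E2_shB BijGroup_def Bij_UNIV bij_shB)

theorem lemma3p2:
  shows "is_free_product (PermG\<lparr>carrier := (groupG :: ('a::field_char_0 ppair \<Rightarrow> 'a ppair) set)\<rparr>)
           groupA groupB
         \<and> comm_group (PermG\<lparr>carrier := (groupA :: ('a::field_char_0 ppair \<Rightarrow> 'a ppair) set)\<rparr>)
         \<and> comm_group (PermG\<lparr>carrier := (groupB :: ('a::field_char_0 ppair \<Rightarrow> 'a ppair) set)\<rparr>)"
proof -
  let ?P = "PermG :: ('a::field_char_0 ppair \<Rightarrow> 'a ppair) monoid"
  let ?H = "?P\<lparr>carrier := (groupG :: ('a::field_char_0 ppair \<Rightarrow> 'a ppair) set)\<rparr>"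
  have gP: "group ?P" by (rule group_BijGroup)
  have sG: "subgroup (groupG :: ('a ppair \<Rightarrow> 'a ppair) set) ?P"
    unfolding groupG_def using E1_sub E2_sub by (intro group.generate_is_subgroup[OF gP]) auto
  have sA: "subgroup (groupA :: ('a ppair \<Rightarrow> 'a ppair) set) ?P"
    unfolding groupA_def using E1_sub by (intro group.generate_is_subgroup[OF gP]) auto
  have sB: "subgroup (groupB :: ('a ppair \<Rightarrow> 'a ppair) set) ?P"
    unfolding groupB_def using E2_sub by (intro group.generate_is_subgroup[OF gP]) auto
  have AG: "(groupA :: ('a ppair \<Rightarrow> 'a ppair) set) \<subseteq> groupG"
    unfolding groupA_def groupG_def by (intro group.mono_generate[OF gP]) auto
  have BG: "(groupB :: ('a ppair \<Rightarrow> 'a ppair) set) \<subseteq> groupG"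
    unfolding groupB_def groupG_def by (intro group.mono_generate[OF gP]) auto
  have gH: "group ?H" using subgroup.subgroup_is_group[OF sG gP] .
  have sAH: "subgroup groupA ?H" using group.subgroup_incl[OF gP sA sG AG] .
  have sBH: "subgroup groupB ?H" using group.subgroup_incl[OF gP sB sG BG] .
  have gen: "generate ?H (groupA \<union> groupB) = groupG"
  proof -
    have ABG: "groupA \<union> groupB \<subseteq> (groupG :: ('a ppair \<Rightarrow> 'a ppair) set)"
      using AG BG by (rule Un_least)
    have "generate ?H (groupA \<union> groupB) = generate ?P (groupA \<union> groupB)"
      by (rule group.generate_consistent[OF gP ABG sG])
    also have "\<dots> = groupG"
    proof
      show "generate ?P (groupA \<union> groupB) \<subseteq> groupG"
        by (rule group.generate_subgroup_incl[OF gP ABG sG])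
      have "E1_maps \<subseteq> (groupA :: ('a ppair \<Rightarrow> 'a ppair) set)"
        unfolding groupA_def by (auto intro: generate.incl)
      moreover have "E2_maps \<subseteq> (groupB :: ('a ppair \<Rightarrow> 'a ppair) set)"
        unfolding groupB_def by (auto intro: generate.incl)
      ultimately have "E1_maps \<union> E2_maps \<subseteq> (groupA :: ('a ppair \<Rightarrow> 'a ppair) set) \<union> groupB"
        by blast
      then show "groupG \<subseteq> generate ?P (groupA \<union> groupB)"
        unfolding groupG_def by (rule group.mono_generate[OF gP])
    qed
    finally show ?thesis .
  qed
  have words: "foldr (\<lambda>x y. x \<otimes>\<^bsub>?H\<^esub> y) ws \<one>\<^bsub>?H\<^esub> \<noteq> \<one>\<^bsub>?H\<^esub>"
    if ne: "ws \<noteq> []" and alt: "alternating_word ?H groupA groupB ws" for ws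
  proof
    assume eq: "foldr (\<lambda>x y. x \<otimes>\<^bsub>?H\<^esub> y) ws \<one>\<^bsub>?H\<^esub> = \<one>\<^bsub>?H\<^esub>"
    obtain s where s: "\<forall>i<length ws. ws ! i \<in> (if even (i + s) then groupA else groupB) - {id}"
      using alt unfolding alternating_word_def by (auto simp: one_PermG)
    have "\<forall>w\<in>set ws. bij w"
    proof
      fix w assume "w \<in> set ws"
      then obtain i where "i < length ws" "w = ws ! i" by (metis in_set_conv_nth)
      then show "bij w" using s bij_A bij_B by (auto split: if_splits)
    qed
    from foldr_eq[OF this] eq have "foldr (\<circ>) ws id = id" by (simp add: one_PermG)
    with word[OF s] ne show False by (simp add: YY_def split: if_splits)
  qed
  have cA: "comm_group (?P\<lparr>carrier := groupA\<rparr>)"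
  proof (rule group.group_comm_groupI)
    show "group (?P\<lparr>carrier := groupA\<rparr>)" using subgroup.subgroup_is_group[OF sA gP] .
    fix x y assume "x \<in> carrier (?P\<lparr>carrier := groupA\<rparr>)" "y \<in> carrier (?P\<lparr>carrier := groupA\<rparr>)"
    then have "x \<in> TA" "y \<in> TA" using groupA_TA by auto
    then obtain P Q where "x = shA P" "y = shA Q" unfolding TA_def by blast
    then show "x \<otimes>\<^bsub>?P\<lparr>carrier := groupA\<rparr>\<^esub> y = y \<otimes>\<^bsub>?P\<lparr>carrier := groupA\<rparr>\<^esub> x"
      by (simp add: mult_shA add.commute)
  qed
  have cB: "comm_group (?P\<lparr>carrier := groupB\<rparr>)"
  proof (rule group.group_comm_groupI)
    show "group (?P\<lparr>carrier := groupB\<rparr>)" using subgroup.subgroup_is_group[OF sB gP] .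
    fix x y assume "x \<in> carrier (?P\<lparr>carrier := groupB\<rparr>)" "y \<in> carrier (?P\<lparr>carrier := groupB\<rparr>)"
    then have "x \<in> TB" "y \<in> TB" using groupB_TB by auto
    then obtain P Q where "x = shB P" "y = shB Q" unfolding TB_def by blast
    then show "x \<otimes>\<^bsub>?P\<lparr>carrier := groupB\<rparr>\<^esub> y = y \<otimes>\<^bsub>?P\<lparr>carrier := groupB\<rparr>\<^esub> x"
      by (simp add: mult_shB add.commute)
  qed
  have gen': "generate ?H (groupA \<union> groupB) = carrier ?H" using gen by simp
  have fp: "is_free_product ?H groupA groupB" unfolding is_free_product_def
  proof (intro conjI gH sAH sBH gen' allI impI)
    fix ws assume "ws \<noteq> [] \<and> alternating_word ?H groupA groupB ws"
    then show "foldr (\<lambda>x y. x \<otimes>\<^bsub>?H\<^esub> y) ws \<one>\<^bsub>?H\<^esub> \<noteq> \<one>\<^bsub>?H\<^esub>"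
      using words by blast
  qed
  show ?thesis using fp cA cB by (intro conjI)
qed


end
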